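(* Let $V$ be the potential of the planar $n$-body problem with positive masses, $c$ a Darboux point with multiplier $-1$, and $W$ the associated matrix. If the variational equation near a conic orbit is partially decoupled, then $W$ has a double (multiple) eigenvalue.
   Context: Positions $q\in\mathbb{C}^{2n}$, body $i$ at $(q_i,q_{i+n})$; $m_{i+n}:=m_i>0$. $V(q)=\sum_{i<j}\frac{m_im_j}{\sqrt{(q_i-q_j)^2+(q_{i+n}-q_{j+n})^2}}$. Darboux point with multiplier $-1$: $c$ with nonzero mutual distances and $\partial V/\partial q_k(c)=-m_kc_k$ for all $k$. $W_{k,l}=\frac1{m_k}\frac{\partial^2V}{\partial q_k\partial q_l}(c)$. $R_\theta=\begin{pmatrix}\cos\theta I_n&-\sin\theta I_n\\ \sin\theta I_n&\cos\theta I_n\end{pmatrix}$, $\theta\in\mathbb{C}$. Partially decoupled: there exist a nonzero subspace $\tilde V$ stable under all $R_\theta$ and $\lambda$ with $Wv=\lambda v$ for all $v\in\tilde V$. *)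

theory Defs
  imports Complex_Main "Jordan_Normal_Form.Char_Poly"
begin

text \<open>Coordinates: q is a complex vector of dimension 2n; body i (i < n) is at
  (q$i, q$(i+n)). Coordinate k (k < 2n) belongs to body k mod n, component k div n.\<close>

definition sqdist :: "nat \<Rightarrow> complex vec \<Rightarrow> nat \<Rightarrow> nat \<Rightarrow> complex" where
  "sqdist n q i j = (q$i - q$j)^2 + (q$(i+n) - q$(j+n))^2"

text \<open>Since positions are complex, the mutual distance r i j is a chosen square root
  of sqdist (a determination of the multivalued potential
  V = sum_{i<j} m_i m_j / r_ij).\<close>

definition gradV :: "nat \<Rightarrow> (nat \<Rightarrow> real) \<Rightarrow> (nat \<Rightarrow> nat \<Rightarrow> complex) \<Rightarrow> complex vec \<Rightarrow> nat \<Rightarrow> complex" where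
  "gradV n m r q k =
     - (\<Sum>b\<in>{0..<n} - {k mod n}.
          of_real (m (k mod n) * m b) * (q$k - q$(b + n * (k div n))) / r (k mod n) b ^ 3)"

text \<open>Hessian of 1/r(u), u = q_a - q_b, w.r.t. components s,t of u.\<close>
definition pairHess :: "nat \<Rightarrow> complex vec \<Rightarrow> (nat \<Rightarrow> nat \<Rightarrow> complex) \<Rightarrow> nat \<Rightarrow> nat \<Rightarrow> nat \<Rightarrow> nat \<Rightarrow> complex" where
  "pairHess n q r a b s t =
     3 * (q$(a + n*s) - q$(b + n*s)) * (q$(a + n*t) - q$(b + n*t)) / r a b ^ 5
     - (if s = t then 1 else 0) / r a b ^ 3"

definition hessV :: "nat \<Rightarrow> (nat \<Rightarrow> real) \<Rightarrow> (nat \<Rightarrow> nat \<Rightarrow> complex) \<Rightarrow> complex vec \<Rightarrow> nat \<Rightarrow> nat \<Rightarrow> complex" where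
  "hessV n m r q k l =
     (if k mod n = l mod n then
        (\<Sum>e\<in>{0..<n} - {k mod n}. of_real (m (k mod n) * m e) * pairHess n q r (k mod n) e (k div n) (l div n))
      else - of_real (m (k mod n) * m (l mod n)) * pairHess n q r (k mod n) (l mod n) (k div n) (l div n))"

definition darboux_point :: "nat \<Rightarrow> (nat \<Rightarrow> real) \<Rightarrow> (nat \<Rightarrow> nat \<Rightarrow> complex) \<Rightarrow> complex vec \<Rightarrow> bool" where
  "darboux_point n m r c \<longleftrightarrow>
     c \<in> carrier_vec (2*n) \<and>
     (\<forall>i<n. \<forall>j<n. i \<noteq> j \<longrightarrow> sqdist n c i j \<noteq> 0 \<and> r i j ^ 2 = sqdist n c i j \<and> r i j = r j i) \<and>
     (\<forall>k<2*n. gradV n m r c k = - of_real (m (k mod n)) * c$k)"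

definition Wmat :: "nat \<Rightarrow> (nat \<Rightarrow> real) \<Rightarrow> (nat \<Rightarrow> nat \<Rightarrow> complex) \<Rightarrow> complex vec \<Rightarrow> complex mat" where
  "Wmat n m r c = mat (2*n) (2*n) (\<lambda>(k,l). hessV n m r c k l / of_real (m (k mod n)))"

definition Rrot :: "nat \<Rightarrow> complex \<Rightarrow> complex mat" where
  "Rrot n \<theta> = mat (2*n) (2*n) (\<lambda>(i,j).
     if i mod n = j mod n then
       (if i div n = 0 \<and> j div n = 0 then cos \<theta>
        else if i div n = 0 then - sin \<theta>
        else if j div n = 0 then sin \<theta>
        else cos \<theta>)
     else 0)"

definition is_subspace :: "nat \<Rightarrow> complex vec set \<Rightarrow> bool" where
  "is_subspace d S \<longleftrightarrow> S \<subseteq> carrier_vec d \<and> 0\<^sub>v d \<in> S \<and>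
     (\<forall>v\<in>S. \<forall>w\<in>S. v + w \<in> S) \<and> (\<forall>a. \<forall>v\<in>S. a \<cdot>\<^sub>v v \<in> S)"

definition partially_decoupled :: "nat \<Rightarrow> complex mat \<Rightarrow> bool" where
  "partially_decoupled n W \<longleftrightarrow>
     (\<exists>S lam. is_subspace (2*n) S \<and> S \<noteq> {0\<^sub>v (2*n)} \<and>
        (\<forall>\<theta>. \<forall>v\<in>S. Rrot n \<theta> *\<^sub>v v \<in> S) \<and>
        (\<forall>v\<in>S. W *\<^sub>v v = lam \<cdot>\<^sub>v v))"

end

theory Submission
  imports Defs "Jordan_Normal_Form.Schur_Decomposition"
begin
hide_const (open) Coset.order

lemma tri_back:
  fixes B :: "'a::field mat"
  assumes B: "B \<in> carrier_mat N N" and ut: "upper_triangular B"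
  and diag: "\<And>i. 0 < i \<Longrightarrow> i < N \<Longrightarrow> B$$(i,i) \<noteq> lam"
  and x: "x \<in> carrier_vec N" and ev: "B *\<^sub>v x = lam \<cdot>\<^sub>v x"
  shows "0 < i \<Longrightarrow> i < N \<Longrightarrow> x$i = 0"
proof (induction "N - i" arbitrary: i rule: less_induct)
  case less
  have "(B *\<^sub>v x)$i = (\<Sum>j\<in>{0..<N}. B$$(i,j) * x$j)"
    using B x less by (simp add: scalar_prod_def)
  also have "\<dots> = (\<Sum>j\<in>{0..<N}. if j = i then B$$(i,i) * x$i else 0)"
  proof (rule sum.cong)
    fix j assume j: "j \<in> {0..<N}"
    show "B$$(i,j) * x$j = (if j = i then B$$(i,i) * x$i else 0)"
    proof (cases "j < i")
      case True thus ?thesis using ut B less unfolding upper_triangular_def by auto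
    next
      case False
      show ?thesis
      proof (cases "j = i")
        case False
        with \<open>\<not> j < i\<close> have "x$j = 0" using less j by (intro less(1)) auto
        thus ?thesis using False by simp
      qed simp
    qed
  qed simp
  also have "\<dots> = B$$(i,i) * x$i" using less by simp
  finally have "lam * x$i = B$$(i,i) * x$i" using ev x less by simp
  thus ?case using diag[OF less(2,3)] by simp
qed

lemma tri_fwd:
  fixes B :: "'a::field mat"
  assumes B: "B \<in> carrier_mat N N" and ut: "upper_triangular B"
  and diag: "\<And>i. 0 < i \<Longrightarrow> i < N \<Longrightarrow> B$$(i,i) \<noteq> lam"
  and y: "y \<in> carrier_vec N" and ev: "transpose_mat B *\<^sub>v y = lam \<cdot>\<^sub>v y"
  and y0: "y$0 = 0"
  shows "j < N \<Longrightarrow> y$j = 0"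
proof (induction j rule: less_induct)
  case (less j)
  show ?case
  proof (cases "j = 0")
    case True thus ?thesis using y0 by simp
  next
    case False
    have "(transpose_mat B *\<^sub>v y)$j = (\<Sum>i\<in>{0..<N}. B$$(i,j) * y$i)"
      using B y less by (simp add: scalar_prod_def)
    also have "\<dots> = (\<Sum>i\<in>{0..<N}. if i = j then B$$(j,j) * y$j else 0)"
    proof (rule sum.cong)
      fix i assume i: "i \<in> {0..<N}"
      show "B$$(i,j) * y$i = (if i = j then B$$(j,j) * y$j else 0)"
      proof (cases "j < i")
        case True thus ?thesis using ut B i unfolding upper_triangular_def by auto
      next
        case False
        show ?thesis
        proof (cases "i = j")
          case False
          with \<open>\<not> j < i\<close> have "y$i = 0" using less i by (intro less(1)) auto
          thus ?thesis using False by simp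
        qed simp
      qed
    qed simp
    also have "\<dots> = B$$(j,j) * y$j" using less by simp
    finally have "lam * y$j = B$$(j,j) * y$j" using ev y less B by simp
    thus ?thesis using diag[of j] False less by simp
  qed
qed

lemma order_prod_linear:
  "order (lam::complex) (\<Prod>a\<leftarrow>as. [:-a,1:]) = length (filter ((=) lam) as)"
proof (induction as)
  case Nil thus ?case by (simp add: order_0I)
next
  case (Cons a as)
  have ne: "(\<Prod>a\<leftarrow>as. [:-a,1:]) \<noteq> (0::complex poly)"
    by (auto simp: prod_list_zero_iff)
  have "order lam ([:-a,1:] * (\<Prod>a\<leftarrow>as. [:-a,1:])) = order lam [:-a,1:] + order lam (\<Prod>a\<leftarrow>as. [:-a,1:])"
    by (rule order_mult, rule no_zero_divisors[OF _ ne]) simp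
  thus ?case using Cons by (auto simp: order_linear')
qed

lemma prod_filter_split:
  "(\<Prod>a\<leftarrow>(filter P as @ filter (\<lambda>a. \<not> P a) as). f a) = (\<Prod>a\<leftarrow>as. (f a :: 'b::comm_monoid_mult))"
  by (induction as) (auto simp: mult.assoc mult.left_commute)

lemma key:
  fixes A :: "complex mat" and d :: "nat \<Rightarrow> complex"
  assumes A: "A \<in> carrier_mat N N"
  and d: "\<And>k. k < N \<Longrightarrow> d k \<noteq> 0"
  and sym: "\<And>k l. k < N \<Longrightarrow> l < N \<Longrightarrow> d k * A$$(k,l) = d l * A$$(l,k)"
  and z: "z \<in> carrier_vec N" and znz: "z \<noteq> 0\<^sub>v N" and ev: "A *\<^sub>v z = lam \<cdot>\<^sub>v z"
  and iso: "(\<Sum>k\<in>{0..<N}. d k * z$k * z$k) = 0"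
  shows "2 \<le> order lam (char_poly A)"
proof (rule ccontr)
  assume "\<not> 2 \<le> order lam (char_poly A)"
  hence ord: "order lam (char_poly A) \<le> 1" by simp
  obtain as where cp: "char_poly A = (\<Prod>a\<leftarrow>as. [:-a,1:])"
    using char_poly_factorized[OF A] by blast
  have len1: "length (filter ((=) lam) as) \<le> 1" using ord cp order_prod_linear by simp
  define es where "es = filter ((=) lam) as @ filter (\<lambda>a. \<not> lam = a) as"
  have cpes: "char_poly A = (\<Prod>a\<leftarrow>es. [:-a,1:])"
    unfolding cp es_def by (rule prod_filter_split[symmetric])
  obtain B P Q where schur: "schur_decomposition A es = (B,P,Q)"
    by (cases "schur_decomposition A es") auto
  from schur_decomposition[OF A cpes schur]
  have wit: "similar_mat_wit A B P Q" and ut: "upper_triangular B" and dg: "diag_mat B = es" by auto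
  note W = similar_mat_witD2[OF A wit]
  have Bc: "B \<in> carrier_mat N N" and Pc: "P \<in> carrier_mat N N" and Qc: "Q \<in> carrier_mat N N"
    using W by auto
  have diag: "B$$(i,i) \<noteq> lam" if "0 < i" "i < N" for i
  proof -
    have "B$$(i,i) = es ! i" using dg Bc that by (auto simp: diag_mat_def)
    also have "es ! i = filter (\<lambda>a. \<not> lam = a) as ! (i - length (filter ((=) lam) as))"
      unfolding es_def using len1 that by (simp add: nth_append)
    also have "\<dots> \<in> set (filter (\<lambda>a. \<not> lam = a) as)"
    proof (rule nth_mem)
      have "length es = N" using dg Bc by (auto simp: diag_mat_def)
      thus "i - length (filter ((=) lam) as) < length (filter (\<lambda>a. \<not> lam = a) as)"
        unfolding es_def using that len1 by simp
    qed
    finally show ?thesis by auto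
  qed
  define x where "x = Q *\<^sub>v z"
  have xc: "x \<in> carrier_vec N" unfolding x_def using Qc z by auto
  have BQ: "B * Q = Q * A"
  proof -
    have e1: "Q * (P * B) = (Q * P) * B" using assoc_mult_mat[OF Qc Pc Bc] by simp
    have "Q * A = Q * (P * B * Q)" using W by simp
    also have "\<dots> = (Q * (P * B)) * Q" using assoc_mult_mat[OF Qc mult_carrier_mat[OF Pc Bc] Qc] by simp
    also have "\<dots> = B * Q" unfolding e1 W(2) using Bc by simp
    finally show ?thesis by simp
  qed
  have evx: "B *\<^sub>v x = lam \<cdot>\<^sub>v x"
  proof -
    have "B *\<^sub>v x = (B * Q) *\<^sub>v z" unfolding x_def using Bc Qc z by simp
    also have "\<dots> = Q *\<^sub>v (A *\<^sub>v z)" unfolding BQ using Qc A z by simp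
    also have "\<dots> = lam \<cdot>\<^sub>v x" unfolding ev x_def using mult_mat_vec[OF Qc z] .
    finally show ?thesis .
  qed
  have zPx: "z = P *\<^sub>v x"
  proof -
    have "P *\<^sub>v x = (P * Q) *\<^sub>v z" unfolding x_def using Pc Qc z by simp
    also have "\<dots> = z" using W z by simp
    finally show ?thesis by simp
  qed
  define u where "u = vec N (\<lambda>k. d k * z$k)"
  have uc: "u \<in> carrier_vec N" unfolding u_def by simp
  have evu: "transpose_mat A *\<^sub>v u = lam \<cdot>\<^sub>v u"
  proof (rule eq_vecI)
    fix l assume l: "l < dim_vec (lam \<cdot>\<^sub>v u)"
    hence l: "l < N" using uc by simp
    have "(transpose_mat A *\<^sub>v u) $ l = (\<Sum>k\<in>{0..<N}. A$$(k,l) * (d k * z$k))"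
      using A l by (simp add: scalar_prod_def u_def)
    also have "\<dots> = (\<Sum>k\<in>{0..<N}. d l * (A$$(l,k) * z$k))"
      by (rule sum.cong, simp) (metis atLeastLessThan_iff l mult.assoc mult.commute sym)
    also have "\<dots> = d l * (A *\<^sub>v z) $ l"
      using A l z by (simp add: scalar_prod_def sum_distrib_left)
    also have "\<dots> = (lam \<cdot>\<^sub>v u) $ l" unfolding ev using l z by (simp add: u_def)
    finally show "(transpose_mat A *\<^sub>v u) $ l = (lam \<cdot>\<^sub>v u) $ l" .
  qed (use A uc in simp)
  define y where "y = transpose_mat P *\<^sub>v u"
  have yc: "y \<in> carrier_vec N" unfolding y_def using Pc uc by auto
  have AP: "A * P = P * B"
  proof -
    have "A * P = P * B * Q * P" using W by simp
    also have "\<dots> = P * B * (Q * P)" using assoc_mult_mat[OF mult_carrier_mat[OF Pc Bc] Qc Pc] by simp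
    also have "\<dots> = P * B" using W Pc Bc by simp
    finally show ?thesis .
  qed
  have evy: "transpose_mat B *\<^sub>v y = lam \<cdot>\<^sub>v y"
  proof -
    have "transpose_mat B *\<^sub>v y = (transpose_mat B * transpose_mat P) *\<^sub>v u"
      unfolding y_def using Bc Pc uc by simp
    also have "transpose_mat B * transpose_mat P = transpose_mat (P * B)"
      using Bc Pc by (simp add: transpose_mult)
    also have "\<dots> = transpose_mat P * transpose_mat A"
      unfolding AP[symmetric] using A Pc by (simp add: transpose_mult)
    also have "(transpose_mat P * transpose_mat A) *\<^sub>v u = transpose_mat P *\<^sub>v (lam \<cdot>\<^sub>v u)"
      using Pc A uc evu by simp
    also have "\<dots> = lam \<cdot>\<^sub>v y" unfolding y_def by (rule mult_mat_vec) (use Pc uc in auto)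
    finally show ?thesis .
  qed
  have Npos: "0 < N" using znz z by (cases N) auto
  have x0: "x$0 \<noteq> 0"
  proof
    assume x0: "x$0 = 0"
    have "x = 0\<^sub>v N"
    proof (rule eq_vecI)
      fix i assume "i < dim_vec (0\<^sub>v N)"
      thus "x $ i = 0\<^sub>v N $ i" using tri_back[OF Bc ut diag xc evx, of i] x0 by (cases "i = 0") auto
    qed (use xc in simp)
    moreover have "P *\<^sub>v 0\<^sub>v N = 0\<^sub>v N" by (rule eq_vecI) (use Pc in auto)
    ultimately have "z = 0\<^sub>v N" using zPx by simp
    thus False using znz by simp
  qed
  have unz: "u \<noteq> 0\<^sub>v N"
  proof
    assume u0: "u = 0\<^sub>v N"
    have "z = 0\<^sub>v N"
    proof (rule eq_vecI)
      fix i assume i: "i < dim_vec (0\<^sub>v N)"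
      hence "u $ i = 0" using u0 by simp
      thus "z $ i = 0\<^sub>v N $ i" using i d[of i] by (simp add: u_def)
    qed (use z in simp)
    thus False using znz by simp
  qed
  have y0: "y$0 \<noteq> 0"
  proof
    assume y0: "y$0 = 0"
    have yz: "y = 0\<^sub>v N"
    proof (rule eq_vecI)
      fix i assume "i < dim_vec (0\<^sub>v N)"
      thus "y $ i = 0\<^sub>v N $ i" using tri_fwd[OF Bc ut diag yc evy y0, of i] by simp
    qed (use yc in simp)
    have "u = transpose_mat (P * Q) *\<^sub>v u" using W uc by simp
    also have "\<dots> = (transpose_mat Q * transpose_mat P) *\<^sub>v u" using Pc Qc by (simp add: transpose_mult)
    also have "\<dots> = transpose_mat Q *\<^sub>v y" unfolding y_def using Pc Qc uc by simp
    also have "\<dots> = 0\<^sub>v N" unfolding yz by (rule eq_vecI) (use Qc in auto)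
    finally show False using unz by simp
  qed
  have "u \<bullet> z = (\<Sum>k\<in>{0..<N}. d k * z$k * z$k)"
    using z by (simp add: scalar_prod_def u_def)
  also have "\<dots> = 0" by (rule iso)
  finally have uz: "u \<bullet> z = 0" .
  have "u \<bullet> z = y \<bullet> x"
    unfolding zPx y_def by (rule transpose_vec_mult_scalar[symmetric, OF Pc xc uc])
  also have "\<dots> = (\<Sum>i\<in>{0..<N}. if i = 0 then y$0 * x$0 else 0)"
    unfolding scalar_prod_def using xc
    by (intro sum.cong) (auto simp: tri_back[OF Bc ut diag xc evx])
  also have "\<dots> = y$0 * x$0" using Npos by simp
  finally show False using uz x0 y0 by simp
qed



lemma divmod2: fixes j n :: nat assumes "j < 2*n" shows "j div n = (if j < n then 0 else 1)" "j mod n = (if j < n then j else j - n)"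
proof -
  show "j div n = (if j < n then 0 else 1)"
    using assms by (auto simp: div_if le_div_geq)
  show "j mod n = (if j < n then j else j - n)"
    using assms by (auto simp: mod_if)
qed

lemma Rrot_half:
  assumes v: "v \<in> carrier_vec (2*n)" and i: "i < 2*n"
  shows "(Rrot n (of_real (pi/2)) *\<^sub>v v) $ i = (if i < n then - v$(i+n) else v$(i-n))"
proof -
  define i' where "i' = (if i < n then i+n else i-n)"
  define cc :: complex where "cc = (if i < n then -1 else 1)"
  have cs: "cos (complex_of_real (pi/2)) = 0" "sin (complex_of_real (pi/2)) = 1"
    by (simp_all add: cos_of_real sin_of_real)
  have i': "i' < 2*n" using i unfolding i'_def by auto
  have "(Rrot n (of_real (pi/2)) *\<^sub>v v) $ i = (\<Sum>j\<in>{0..<2*n}. Rrot n (of_real (pi/2)) $$ (i,j) * v$j)"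
    using i v by (simp add: Rrot_def scalar_prod_def)
  also have "\<dots> = (\<Sum>j\<in>{0..<2*n}. if j = i' then cc * v$i' else 0)"
  proof (rule sum.cong)
    fix j assume j: "j \<in> {0..<2*n}"
    hence j2: "j < 2*n" by simp
    show "Rrot n (of_real (pi/2)) $$ (i,j) * v$j = (if j = i' then cc * v$i' else 0)"
      using i j2 divmod2[OF i] divmod2[OF j2] cs
      unfolding Rrot_def i'_def cc_def by (auto simp: index_mat; linarith)
  qed simp
  also have "\<dots> = cc * v$i'" using i' by simp
  finally show ?thesis unfolding cc_def i'_def by simp
qed

lemma pairHess_st: "pairHess n q r a b s t = pairHess n q r a b t s"
proof -
  have "3 * (q$(a + n*s) - q$(b + n*s)) * (q$(a + n*t) - q$(b + n*t))
      = 3 * (q$(a + n*t) - q$(b + n*t)) * (q$(a + n*s) - q$(b + n*s))"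
    by (simp add: algebra_simps)
  moreover have "(if s = t then 1 else 0) = (if t = s then 1 else (0::complex))" by auto
  ultimately show ?thesis unfolding pairHess_def by simp
qed

lemma pairHess_swap: assumes "r a b = r b a"
  shows "pairHess n q r a b s t = pairHess n q r b a t s"
proof -
  have "3 * (q$(a + n*s) - q$(b + n*s)) * (q$(a + n*t) - q$(b + n*t))
      = 3 * (q$(b + n*t) - q$(a + n*t)) * (q$(b + n*s) - q$(a + n*s))"
    by (simp add: algebra_simps)
  moreover have "(if s = t then 1 else 0) = (if t = s then 1 else (0::complex))" by auto
  ultimately show ?thesis using assms unfolding pairHess_def by simp
qed

lemma hessV_sym:
  assumes rs: "\<forall>i<n. \<forall>j<n. i \<noteq> j \<longrightarrow> r i j = r j i" and k: "k < 2*n" and l: "l < 2*n"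
  shows "hessV n m r q k l = hessV n m r q l k"
proof (cases "k mod n = l mod n")
  case True
  thus ?thesis unfolding hessV_def using pairHess_st by simp
next
  case False
  have n: "0 < n" using k by simp
  have "r (k mod n) (l mod n) = r (l mod n) (k mod n)" using rs False n by simp
  from pairHess_swap[of r "k mod n" "l mod n", OF this]
  show ?thesis unfolding hessV_def using False by (auto simp: mult.commute)
qed

lemma sum_split2: fixes n :: nat shows "(\<Sum>k\<in>{0..<2*n}. f k) = (\<Sum>k\<in>{0..<n}. f k + f (k+n))"
proof -
  have "{0..<2*n} = {0..<n} \<union> {0+n..<n+n}" by auto
  hence "(\<Sum>k\<in>{0..<2*n}. f k) = (\<Sum>k\<in>{0..<n}. f k) + (\<Sum>k\<in>{0+n..<n+n}. f k)"
    by (simp add: sum.union_disjoint)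
  also have "(\<Sum>k\<in>{0+n..<n+n}. f k) = (\<Sum>k\<in>{0..<n}. f (k+n))"
    by (rule sum.shift_bounds_nat_ivl)
  finally show ?thesis by (simp add: sum.distrib)
qed

theorem theorem10:
  fixes n :: nat and m :: "nat \<Rightarrow> real" and r :: "nat \<Rightarrow> nat \<Rightarrow> complex" and c :: "complex vec"
  assumes "\<forall>i<n. m i > 0"
    and "darboux_point n m r c"
    and "partially_decoupled n (Wmat n m r c)"
  shows "\<exists>\<mu>. order \<mu> (char_poly (Wmat n m r c)) \<ge> 2"
proof -
  let ?W = "Wmat n m r c"
  from assms(3) obtain S lam where sub: "is_subspace (2*n) S" and ne: "S \<noteq> {0\<^sub>v (2*n)}"
    and rot: "\<forall>\<theta>. \<forall>v\<in>S. Rrot n \<theta> *\<^sub>v v \<in> S" and eig: "\<forall>v\<in>S. ?W *\<^sub>v v = lam \<cdot>\<^sub>v v"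
    unfolding partially_decoupled_def by blast
  from sub have Sc: "S \<subseteq> carrier_vec (2*n)" and S0: "0\<^sub>v (2*n) \<in> S"
    and Sadd: "\<forall>v\<in>S. \<forall>w\<in>S. v + w \<in> S" and Ssm: "\<forall>a. \<forall>v\<in>S. a \<cdot>\<^sub>v v \<in> S"
    unfolding is_subspace_def by auto
  obtain v where vS: "v \<in> S" and vnz: "v \<noteq> 0\<^sub>v (2*n)" using ne S0 by blast
  have vc: "v \<in> carrier_vec (2*n)" using vS Sc by auto
  define jv where "jv = Rrot n (of_real (pi/2)) *\<^sub>v v"
  have jvS: "jv \<in> S" unfolding jv_def using rot vS by blast
  have jvc: "jv \<in> carrier_vec (2*n)" using jvS Sc by auto
  define w where "w = v + \<i> \<cdot>\<^sub>v jv"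
  have wS: "w \<in> S" unfolding w_def using Sadd Ssm vS jvS by blast
  have jv1: "jv $ k = - v$(k+n)" and jv2: "jv $ (k+n) = v$k" if "k < n" for k
    using Rrot_half[OF vc, of k] Rrot_half[OF vc, of "k+n"] that unfolding jv_def by auto
  have w1: "w $ k = v$k - \<i> * v$(k+n)" and w2: "w $ (k+n) = v$(k+n) + \<i> * v$k" if "k < n" for k
    using that jv1[OF that] jv2[OF that] vc jvc unfolding w_def by auto
  define z where "z = (if w = 0\<^sub>v (2*n) then v else w)"
  have zS: "z \<in> S" unfolding z_def using vS wS by auto
  have znz: "z \<noteq> 0\<^sub>v (2*n)" unfolding z_def using vnz by auto
  have zc: "z \<in> carrier_vec (2*n)" using zS Sc by auto
  have zev: "?W *\<^sub>v z = lam \<cdot>\<^sub>v z" using eig zS by blast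
  have zsq: "z$(k+n) * z$(k+n) = - (z$k * z$k)" if k: "k < n" for k
  proof (cases "w = 0\<^sub>v (2*n)")
    case True
    hence "w $ k = 0" using k by simp
    hence "v$k = \<i> * v$(k+n)" using w1[OF k] by simp
    thus ?thesis using True unfolding z_def by (simp add: algebra_simps)
  next
    case False
    have "w$(k+n) = \<i> * w$k" unfolding w1[OF k] w2[OF k] by (simp add: right_diff_distrib mult.assoc[symmetric])
    thus ?thesis using False unfolding z_def by (simp add: algebra_simps)
  qed
  define d where "d = (\<lambda>k. complex_of_real (m (k mod n)))"
  have dnz: "d k \<noteq> 0" if "k < 2*n" for k
  proof -
    have "k mod n < n" using that by simp
    thus ?thesis using assms(1) unfolding d_def by auto
  qed
  have rs: "\<forall>i<n. \<forall>j<n. i \<noteq> j \<longrightarrow> r i j = r j i"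
    using assms(2) unfolding darboux_point_def by blast
  have Wc: "?W \<in> carrier_mat (2*n) (2*n)" unfolding Wmat_def by simp
  have sym: "d k * ?W$$(k,l) = d l * ?W$$(l,k)" if "k < 2*n" "l < 2*n" for k l
  proof -
    have "d k * ?W$$(k,l) = hessV n m r c k l"
      using that dnz[OF that(1)] unfolding Wmat_def d_def by simp
    also have "\<dots> = hessV n m r c l k" by (rule hessV_sym[OF rs that])
    also have "\<dots> = d l * ?W$$(l,k)"
      using that dnz[OF that(2)] unfolding Wmat_def d_def by simp
    finally show ?thesis .
  qed
  have iso: "(\<Sum>k\<in>{0..<2*n}. d k * z$k * z$k) = 0"
    unfolding sum_split2
  proof (rule sum.neutral, intro ballI)
    fix k assume "k \<in> {0..<n}"
    hence k: "k < n" by simp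
    have "d (k+n) = d k" unfolding d_def by simp
    thus "d k * z$k * z$k + d (k+n) * z$(k+n) * z$(k+n) = 0"
      using zsq[OF k] by (simp add: algebra_simps)
  qed
  have "2 \<le> order lam (char_poly ?W)"
    by (rule key[OF Wc dnz sym zc znz zev iso])
  thus ?thesis by blast
qed

end
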